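(* There is a formula $\phi_{\in}(X_l,X_r,Z)$ in the signature of $\mathcal{W}(I)$ such that for every $i\in I$ and every $A\in\mathcal{P}_{\mathrm{fci}}(I)$, $$i\in A \iff \mathcal{W}(I)\models\phi_{\in}(l(A),r(A),\{i\}).$$
   Context: Let $I$ be a dense linear order with left endpoint $0$ and no right endpoint. Let $\mathcal{P}_{\mathrm{fci}}(I)$ be the set of finite unions of closed intervals $[i,j]$, $[i,+\infty)$, $(-\infty,j]$ of $I$. For $A\in\mathcal{P}_{\mathrm{fci}}(I)$, $l(A)$ and $r(A)$ are the finite sets of left and right endpoints of $A$. Left endpoints are the minima of the maximal closed intervals composing $A$, and right endpoints are the maxima of the bounded ones. $\mathcal{W}(I)$ has universe the finite subsets of $I$ and signature $\{\cup,\cap,\bot,c_0,\min,\max,\mathrm{ips}\}$, interpreted as follows. - $\cup$ and $\cap$ are union and intersection. - $\bot$ is $\emptyset$, and $c_0$ is $\{0\}$. - $\min$ and $\max$ send a nonempty set to the singleton of its minimum, respectively maximum, and fix $\emptyset$. - $\mathrm{ips}(A,B)=\{i\in A: s_A(i)\in B\}$, where $s_A$ is the successor function of $A$. *)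

theory Defs
  imports Main
begin

definition closed_ival :: "'a::linorder set \<Rightarrow> bool" where
  "closed_ival C \<longleftrightarrow>
     (\<exists>i j. i \<le> j \<and> C = {i..j}) \<or> (\<exists>i. C = {i..}) \<or> (\<exists>j. C = {..j})"

definition fci :: "'a::linorder set \<Rightarrow> bool" where
  "fci A \<longleftrightarrow> (\<exists>S. finite S \<and> (\<forall>C\<in>S. closed_ival C) \<and> A = \<Union>S)"

definition max_ival :: "'a::linorder set \<Rightarrow> 'a set \<Rightarrow> bool" where
  "max_ival A C \<longleftrightarrow> closed_ival C \<and> C \<subseteq> A \<and>
     (\<forall>D. closed_ival D \<and> C \<subseteq> D \<and> D \<subseteq> A \<longrightarrow> D = C)"

definition lend :: "'a::linorder set \<Rightarrow> 'a set" where
  "lend A = {x. \<exists>C. max_ival A C \<and> x \<in> C \<and> (\<forall>y\<in>C. x \<le> y)}"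

definition rend :: "'a::linorder set \<Rightarrow> 'a set" where
  "rend A = {x. \<exists>C. max_ival A C \<and> x \<in> C \<and> (\<forall>y\<in>C. y \<le> x)}"

definition wmin :: "'a::linorder set \<Rightarrow> 'a set" where
  "wmin S = (if S = {} then {} else {Min S})"

definition wmax :: "'a::linorder set \<Rightarrow> 'a set" where
  "wmax S = (if S = {} then {} else {Max S})"

definition succ_in :: "'a::linorder set \<Rightarrow> 'a \<Rightarrow> 'a \<Rightarrow> bool" where
  "succ_in A i j \<longleftrightarrow> j \<in> A \<and> i < j \<and> (\<forall>k\<in>A. i < k \<longrightarrow> j \<le> k)"

definition ips :: "'a::linorder set \<Rightarrow> 'a set \<Rightarrow> 'a set" where
  "ips A B = {i \<in> A. \<exists>j. succ_in A i j \<and> j \<in> B}"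

text \<open>First-order syntax over the signature {union, inter, bot, c0, min, max, ips}
  (equality is the only relation symbol); variables are natural numbers.\<close>
datatype wtrm = WVar nat | WUn wtrm wtrm | WInt wtrm wtrm | WBot | WC0
  | WMin wtrm | WMax wtrm | WIps wtrm wtrm

datatype wfml = WEq wtrm wtrm | WNeg wfml | WConj wfml wfml | WEx nat wfml

fun tvars :: "wtrm \<Rightarrow> nat set" where
  "tvars (WVar n) = {n}"
| "tvars (WUn s t) = tvars s \<union> tvars t"
| "tvars (WInt s t) = tvars s \<union> tvars t"
| "tvars WBot = {}"
| "tvars WC0 = {}"
| "tvars (WMin t) = tvars t"
| "tvars (WMax t) = tvars t"
| "tvars (WIps s t) = tvars s \<union> tvars t"

fun fvars :: "wfml \<Rightarrow> nat set" where
  "fvars (WEq s t) = tvars s \<union> tvars t"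
| "fvars (WNeg f) = fvars f"
| "fvars (WConj f g) = fvars f \<union> fvars g"
| "fvars (WEx n f) = fvars f - {n}"

text \<open>z is the left endpoint 0 of I\<close>
fun teval :: "'a::linorder \<Rightarrow> (nat \<Rightarrow> 'a set) \<Rightarrow> wtrm \<Rightarrow> 'a set" where
  "teval z e (WVar n) = e n"
| "teval z e (WUn s t) = teval z e s \<union> teval z e t"
| "teval z e (WInt s t) = teval z e s \<inter> teval z e t"
| "teval z e WBot = {}"
| "teval z e WC0 = {z}"
| "teval z e (WMin t) = wmin (teval z e t)"
| "teval z e (WMax t) = wmax (teval z e t)"
| "teval z e (WIps s t) = ips (teval z e s) (teval z e t)"

fun wsat :: "'a::linorder \<Rightarrow> (nat \<Rightarrow> 'a set) \<Rightarrow> wfml \<Rightarrow> bool" where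
  "wsat z e (WEq s t) = (teval z e s = teval z e t)"
| "wsat z e (WNeg f) = (\<not> wsat z e f)"
| "wsat z e (WConj f g) = (wsat z e f \<and> wsat z e g)"
| "wsat z e (WEx n f) = (\<exists>X. finite X \<and> wsat z (e(n := X)) f)"

end

theory Submission
  imports Defs
begin


lemma civ_cases:
  fixes z :: "'a::linorder" and C D :: "'a set"
  assumes "closed_ival C" "\<forall>x. z \<le> x"
  shows "(\<exists>a b. a \<le> b \<and> C = {a..b}) \<or> (\<exists>a. C = {a..})"
proof -
  have e: "\<And>j. {..j} = {z..j}" using assms(2) by auto
  from assms(1) show ?thesis unfolding closed_ival_def
  proof (elim disjE exE)
    fix j assume "C = {..j}"
    then show ?thesis using e[of j] assms(2) by blast
  qed blast+
qed

lemma civ_convex: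
  assumes "closed_ival C" "x \<in> C" "y \<in> C" "x \<le> w" "w \<le> y"
  shows "w \<in> C"
  using assms unfolding closed_ival_def by force

lemma civ_union:
  fixes z :: "'a::linorder" and C D :: "'a set"
  assumes "\<forall>x. z \<le> x" "closed_ival C" "closed_ival D" "C \<inter> D \<noteq> {}"
  shows "closed_ival (C \<union> D)"
proof -
  have c: "(\<exists>a b. a \<le> b \<and> C = {a..b}) \<or> (\<exists>a. C = {a..})"
    using civ_cases[OF assms(2,1)] .
  have d: "(\<exists>a b. a \<le> b \<and> D = {a..b}) \<or> (\<exists>a. D = {a..})"
    using civ_cases[OF assms(3,1)] .
  show ?thesis
  proof (cases "\<exists>a. C = {a..}")
    case True
    then obtain a where a: "C = {a..}" by blast
    from d show ?thesis
    proof
      assume "\<exists>p q. p \<le> q \<and> D = {p..q}"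
      then obtain p q where "p \<le> q" "D = {p..q}" by blast
      then have "C \<union> D = {min a p..}" using a assms(4) by (auto simp: min_def)
      then show ?thesis unfolding closed_ival_def by blast
    next
      assume "\<exists>p. D = {p..}"
      then obtain p where "D = {p..}" by blast
      then have "C \<union> D = {min a p..}" using a by (auto simp: min_def)
      then show ?thesis unfolding closed_ival_def by blast
    qed
  next
    case False
    then obtain a b where ab: "a \<le> b" "C = {a..b}" using c by blast
    from d show ?thesis
    proof
      assume "\<exists>p q. p \<le> q \<and> D = {p..q}"
      then obtain p q where "p \<le> q" "D = {p..q}" by blast
      then have "C \<union> D = {min a p..max b q}" using ab assms(4) by (auto simp: min_def max_def)
      moreover have "min a p \<le> max b q" using ab \<open>p \<le> q\<close> by (auto simp: min_def max_def)
      ultimately show ?thesis unfolding closed_ival_def by blast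
    next
      assume "\<exists>p. D = {p..}"
      then obtain p where "D = {p..}" by blast
      then have "C \<union> D = {min a p..}" using ab assms(4) by (auto simp: min_def max_def)
      then show ?thesis unfolding closed_ival_def by blast
    qed
  qed
qed

lemma civ_min:
  fixes z :: "'a::linorder" and C D :: "'a set"
  assumes "closed_ival C" "\<forall>x. z \<le> x"
  shows "\<exists>l\<in>C. \<forall>y\<in>C. l \<le> y"
  using civ_cases[OF assms] by auto

lemma civ_max:
  fixes z :: "'a::linorder" and C D :: "'a set"
  assumes "closed_ival C" "\<forall>x. z \<le> x" "\<forall>y\<in>C. y < a" "C \<noteq> {}"
  shows "\<exists>h\<in>C. \<forall>y\<in>C. y \<le> h"
proof -
  from civ_cases[OF assms(1,2)] show ?thesis
  proof
    assume "\<exists>a b. a \<le> b \<and> C = {a..b}"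
    then show ?thesis by auto
  next
    assume "\<exists>p. C = {p..}"
    then obtain p where "C = {p..}" by blast
    then have "max p a \<in> C" by auto
    then show ?thesis using assms(3) by auto
  qed
qed

lemma max_ival_inter:
  fixes z :: "'a::linorder" and C D :: "'a set"
  assumes "\<forall>x. z \<le> x" "max_ival A C" "max_ival A D" "C \<inter> D \<noteq> {}"
  shows "C = D"
proof -
  have u: "closed_ival (C \<union> D)"
    using civ_union[OF assms(1)] assms unfolding max_ival_def by blast
  have "C \<union> D \<subseteq> A" using assms unfolding max_ival_def by blast
  then have "C \<union> D = C" "C \<union> D = D" using u assms(2,3) unfolding max_ival_def
    by (meson sup.cobounded1 sup.cobounded2)+
  then show ?thesis by blast
qed


lemma closed_absorb:
  fixes z :: "'a::linorder" and C :: "'a set"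
  assumes bot: "\<forall>x. z \<le> x"
    and dense: "\<forall>x y::'a. x < y \<longrightarrow> (\<exists>w. x < w \<and> w < y)"
    and S: "finite S" "\<forall>E\<in>S. closed_ival E"
    and C: "closed_ival C" "C \<subseteq> \<Union>S" "i \<in> C"
    and cl: "\<forall>E\<in>S. E \<inter> C \<noteq> {} \<longrightarrow> E \<subseteq> C"
    and D: "closed_ival D" "C \<subseteq> D" "D \<subseteq> \<Union>S"
  shows "D = C"
proof (rule ccontr)
  assume "D \<noteq> C"
  then obtain x where x: "x \<in> D" "x \<notin> C" using D by blast
  then have "x \<noteq> i" using C by blast
  have iD: "i \<in> D" using C D by blast
  obtain Ex where Ex: "Ex \<in> S" "x \<in> Ex" using x D by blast
  have ExC: "Ex \<inter> C = {}" using cl Ex x by blast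
  show False
  proof (cases "i < x")
    case True
    have "\<not> (\<exists>a. C = {a..})"
    proof
      assume "\<exists>a. C = {a..}"
      then obtain a where "C = {a..}" by blast
      then show False using C True x by auto
    qed
    then obtain a b where ab: "a \<le> b" "C = {a..b}" using civ_cases[OF C(1) bot] by blast
    have bx: "b < x" using ab x C True by auto
    have bC: "b \<in> C" using ab by auto
    have above: "E \<subseteq> {b<..}" if "E \<in> S" "E \<inter> C = {}" "y \<in> E" "b < y" for E y
    proof
      fix e assume e: "e \<in> E"
      show "e \<in> {b<..}"
      proof (rule ccontr)
        assume "e \<notin> {b<..}"
        then have "e \<le> b" by auto
        then have "b \<in> E" using civ_convex[of E e y b] that e S by auto
        then show False using that bC by blast
      qed
    qed
    define S2 where "S2 = {E\<in>S. E \<subseteq> {b<..} \<and> (\<exists>y\<in>E. y \<le> x)}"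
    have ExS2: "Ex \<in> S2" unfolding S2_def using above[OF Ex(1) ExC Ex(2) bx] Ex by blast
    define lo :: "'a set \<Rightarrow> 'a" where "lo E = (SOME l. l \<in> E \<and> (\<forall>y\<in>E. l \<le> y))" for E
    have lo: "lo E \<in> E \<and> (\<forall>y\<in>E. lo E \<le> y)" if "E \<in> S" for E
      unfolding lo_def by (rule someI_ex) (use civ_min[of E z] S that bot in blast)
    have fin: "finite (lo ` S2)" using S unfolding S2_def by auto
    have ne: "lo ` S2 \<noteq> {}" using ExS2 by blast
    define m where "m = Min (lo ` S2)"
    obtain E0 where E0: "E0 \<in> S2" "m = lo E0" using Min_in[OF fin ne] m_def by auto
    have "b < m" using E0 lo[of E0] unfolding S2_def by auto
    then obtain y where y: "b < y" "y < m" using dense by blast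
    have "m \<le> x" using E0 lo[of E0] unfolding S2_def by force
    then have yx: "y \<le> x" using y by auto
    have "y \<in> D" using civ_convex[OF D(1) iD x(1)] yx y ab C(3) by auto
    then obtain E where E: "E \<in> S" "y \<in> E" using D by blast
    have EC: "E \<inter> C = {}"
    proof (rule ccontr)
      assume "E \<inter> C \<noteq> {}"
      then have "y \<in> C" using cl E by blast
      then show False using y ab by auto
    qed
    have "E \<in> S2" unfolding S2_def using above[OF E(1) EC E(2) y(1)] E yx by blast
    then have "m \<le> lo E" unfolding m_def using fin by auto
    also have "lo E \<le> y" using lo[OF E(1)] E by auto
    finally show False using y by auto
  next
    case False
    then have xi: "x < i" using \<open>x \<noteq> i\<close> by auto
    obtain a where aC: "a \<in> C" and amin: "\<forall>y\<in>C. a \<le> y" using civ_min[OF C(1) bot] by blast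
    have xa: "x < a"
    proof (rule ccontr)
      assume "\<not> x < a"
      then have "x \<in> C" using civ_convex[OF C(1) aC C(3)] xi by auto
      then show False using x by blast
    qed
    have below: "E \<subseteq> {..<a}" if "E \<in> S" "E \<inter> C = {}" "y \<in> E" "y < a" for E y
    proof
      fix e assume e: "e \<in> E"
      show "e \<in> {..<a}"
      proof (rule ccontr)
        assume "e \<notin> {..<a}"
        then have "a \<le> e" by auto
        then have "a \<in> E" using civ_convex[of E y e a] that e S by auto
        then show False using that aC by blast
      qed
    qed
    define S2 where "S2 = {E\<in>S. E \<subseteq> {..<a} \<and> (\<exists>y\<in>E. x \<le> y)}"
    have ExS2: "Ex \<in> S2" unfolding S2_def using below[OF Ex(1) ExC Ex(2) xa] Ex by blast
    define hi :: "'a set \<Rightarrow> 'a" where "hi E = (SOME h. h \<in> E \<and> (\<forall>y\<in>E. y \<le> h))" for E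
    have hi: "hi E \<in> E \<and> (\<forall>y\<in>E. y \<le> hi E)" if "E \<in> S2" for E
    proof -
      have "E \<in> S" "E \<subseteq> {..<a}" "E \<noteq> {}" using that unfolding S2_def by auto
      then have "\<exists>h\<in>E. \<forall>y\<in>E. y \<le> h" using civ_max[of E z a] S bot by auto
      then show ?thesis unfolding hi_def by (rule someI_ex[where P="\<lambda>h. h \<in> E \<and> (\<forall>y\<in>E. y \<le> h)", OF bexE]) blast
    qed
    have fin: "finite (hi ` S2)" using S unfolding S2_def by auto
    have ne: "hi ` S2 \<noteq> {}" using ExS2 by blast
    define m where "m = Max (hi ` S2)"
    obtain E0 where E0: "E0 \<in> S2" "m = hi E0" using Max_in[OF fin ne] m_def by auto
    have "m < a" using E0 hi[of E0] unfolding S2_def by auto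
    then obtain y where y: "m < y" "y < a" using dense by blast
    have "x \<le> m" using E0 hi[of E0] unfolding S2_def by force
    then have yx: "x \<le> y" using y by auto
    have "a \<le> i" using amin C(3) by blast
    then have "y \<le> i" using y by auto
    then have "y \<in> D" using civ_convex[OF D(1) x(1) iD] yx by auto
    then obtain E where E: "E \<in> S" "y \<in> E" using D by blast
    have EC: "E \<inter> C = {}" using cl E y amin by (meson disjoint_iff leD subsetD)
    have ES2: "E \<in> S2" unfolding S2_def using below[OF E(1) EC E(2) y(2)] E yx by blast
    then have "hi E \<le> m" unfolding m_def using fin by auto
    moreover have "y \<le> hi E" using hi[OF ES2] E by auto
    ultimately show False using y by auto
  qed
qed


lemma exists_max_ival:
  fixes z :: "'a::linorder" and A :: "'a set"
  assumes bot: "\<forall>x. z \<le> x"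
    and dense: "\<forall>x y::'a. x < y \<longrightarrow> (\<exists>w. x < w \<and> w < y)"
    and "fci A" "i \<in> A"
  shows "\<exists>C. max_ival A C \<and> i \<in> C"
proof -
  obtain S where S: "finite S" "\<forall>E\<in>S. closed_ival E" "A = \<Union>S"
    using assms(3) unfolding fci_def by blast
  define F where "F = {S'. S' \<subseteq> S \<and> i \<in> \<Union>S' \<and> closed_ival (\<Union>S')}"
  have finF: "finite F" using S(1) unfolding F_def by auto
  obtain E1 where E1: "E1 \<in> S" "i \<in> E1" using assms(4) S by blast
  have "{E1} \<in> F" unfolding F_def using E1 S by auto
  then have neF: "card ` F \<noteq> {}" by blast
  have "Max (card ` F) \<in> card ` F" using Max_in[OF _ neF] finF by blast
  then obtain S' where S': "S' \<in> F" "card S' = Max (card ` F)" by auto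
  have maxc: "card S'' \<le> card S'" if "S'' \<in> F" for S''
    using S'(2) finF that by auto
  define C where "C = \<Union>S'"
  have SS: "S' \<subseteq> S" "i \<in> C" "closed_ival C" using S' unfolding F_def C_def by auto
  have finS': "finite S'" using SS(1) S(1) finite_subset by blast
  have cl: "\<forall>E\<in>S. E \<inter> C \<noteq> {} \<longrightarrow> E \<subseteq> C"
  proof (intro ballI impI)
    fix E assume E: "E \<in> S" "E \<inter> C \<noteq> {}"
    have "closed_ival (E \<union> C)" using civ_union[OF bot _ SS(3) E(2)] S(2) E(1) by blast
    then have "insert E S' \<in> F" unfolding F_def using SS E C_def by auto
    then have "card (insert E S') \<le> card S'" using maxc by blast
    then have "E \<in> S'" using finS' by (metis card_insert_disjoint not_less_eq_eq order_refl)
    then show "E \<subseteq> C" unfolding C_def by blast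
  qed
  have "C \<subseteq> A" using SS(1) S(3) C_def by blast
  have "max_ival A C" unfolding max_ival_def
  proof (intro conjI allI impI)
    fix D assume D: "closed_ival D \<and> C \<subseteq> D \<and> D \<subseteq> A"
    show "D = C"
      using closed_absorb[OF bot dense S(1,2) SS(3) _ SS(2) cl] D \<open>C \<subseteq> A\<close> S(3) by blast
  qed (use SS \<open>C \<subseteq> A\<close> in auto)
  then show ?thesis using SS by blast
qed

lemma fci_mem_char:
  fixes z :: "'a::linorder" and A :: "'a set"
  assumes bot: "\<forall>x. z \<le> x"
    and dense: "\<forall>x y::'a. x < y \<longrightarrow> (\<exists>w. x < w \<and> w < y)"
    and "fci A"
  shows "i \<in> A \<longleftrightarrow> (\<exists>l\<in>lend A. l \<le> i \<and> (\<forall>r\<in>rend A. \<not> (l \<le> r \<and> r < i)))"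
proof
  assume "i \<in> A"
  then obtain C where C: "max_ival A C" "i \<in> C" using exists_max_ival[OF bot dense assms(3)] by blast
  have cC: "closed_ival C" using C unfolding max_ival_def by blast
  obtain l where l: "l \<in> C" "\<forall>y\<in>C. l \<le> y" using civ_min[OF cC bot] by blast
  have "l \<in> lend A" unfolding lend_def using C l by blast
  moreover have "l \<le> i" using l C by blast
  moreover have "\<not> (l \<le> r \<and> r < i)" if r: "r \<in> rend A" for r
  proof
    assume lr: "l \<le> r \<and> r < i"
    obtain D where D: "max_ival A D" "r \<in> D" "\<forall>y\<in>D. y \<le> r" using r unfolding rend_def by blast
    have "r \<in> C" using civ_convex[OF cC l(1) C(2)] lr by auto
    then have "C = D" using max_ival_inter[OF bot C(1) D(1)] D(2) by blast
    then show False using D(3) C(2) lr by auto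
  qed
  ultimately show "\<exists>l\<in>lend A. l \<le> i \<and> (\<forall>r\<in>rend A. \<not> (l \<le> r \<and> r < i))" by blast
next
  assume "\<exists>l\<in>lend A. l \<le> i \<and> (\<forall>r\<in>rend A. \<not> (l \<le> r \<and> r < i))"
  then obtain l where l: "l \<in> lend A" "l \<le> i" "\<forall>r\<in>rend A. \<not> (l \<le> r \<and> r < i)" by blast
  obtain C where C: "max_ival A C" "l \<in> C" "\<forall>y\<in>C. l \<le> y" using l(1) unfolding lend_def by blast
  have cC: "closed_ival C" and CA: "C \<subseteq> A" using C unfolding max_ival_def by blast+
  show "i \<in> A"
  proof (cases "i \<in> C")
    case True then show ?thesis using CA by blast
  next
    case False
    from civ_cases[OF cC bot] show ?thesis
    proof
      assume "\<exists>a b. a \<le> b \<and> C = {a..b}"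
      then obtain a b where ab: "a \<le> b" "C = {a..b}" by blast
      have "b \<in> rend A" unfolding rend_def using C(1) ab by auto
      moreover have "l \<le> b" using C(2) ab by auto
      moreover have "b < i" using False ab C(2) l(2) by auto
      ultimately show ?thesis using l(3) by blast
    next
      assume "\<exists>a. C = {a..}"
      then obtain a where "C = {a..}" by blast
      then show ?thesis using False C(2) l(2) by auto
    qed
  qed
qed


definition wsing :: "wtrm \<Rightarrow> wfml" where
  "wsing t = WConj (WEq (WMin t) t) (WNeg (WEq t WBot))"
definition wle :: "wtrm \<Rightarrow> wtrm \<Rightarrow> wfml" where
  "wle s t = WEq (WMin (WUn s t)) s"
definition wmem :: "wtrm \<Rightarrow> wtrm \<Rightarrow> wfml" where
  "wmem s t = WEq (WInt s t) s"

definition phi :: wfml where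
  "phi = WEx 3 (WConj (wsing (WVar 3)) (WConj (wmem (WVar 3) (WVar 0))
     (WConj (wle (WVar 3) (WVar 2)) (WNeg (WEx 4 (WConj (wsing (WVar 4))
       (WConj (wmem (WVar 4) (WVar 1)) (WConj (wle (WVar 3) (WVar 4))
         (WConj (wle (WVar 4) (WVar 2)) (WNeg (WEq (WVar 4) (WVar 2))))))))))))"

lemma sing_sem: "finite X \<Longrightarrow> (wmin X = X \<and> X \<noteq> {}) \<longleftrightarrow> (\<exists>x. X = {x})"
  unfolding wmin_def by auto

lemma le_sem: "wmin ({x} \<union> {y}) = {x} \<longleftrightarrow> (x::'a::linorder) \<le> y"
  unfolding wmin_def by (auto simp: min_def)

lemma Int_absorb_singleton: "{x} \<inter> L = {x} \<longleftrightarrow> x \<in> L" by auto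

lemma phi_vars: "fvars phi \<subseteq> {0,1,2}"
  unfolding phi_def wsing_def wle_def wmem_def by auto

lemma phi_sem:
  fixes z :: "'a::linorder"
  shows "wsat z ((\<lambda>_. {})(0 := L, 1 := R, 2 := {i})) phi \<longleftrightarrow>
    (\<exists>l\<in>L. l \<le> i \<and> (\<forall>r\<in>R. \<not> (l \<le> r \<and> r < i)))"
proof -
  have "wsat z ((\<lambda>_. {})(0 := L, 1 := R, 2 := {i})) phi \<longleftrightarrow>
    (\<exists>X. finite X \<and> (wmin X = X \<and> X \<noteq> {}) \<and> X \<inter> L = X \<and> wmin (X \<union> {i}) = X \<and>
      \<not> (\<exists>Y. finite Y \<and> (wmin Y = Y \<and> Y \<noteq> {}) \<and> Y \<inter> R = Y \<and> wmin (X \<union> Y) = X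
          \<and> wmin (Y \<union> {i}) = Y \<and> Y \<noteq> {i}))"
    unfolding phi_def wsing_def wle_def wmem_def by simp
  also have "\<dots> \<longleftrightarrow> (\<exists>x. {x} \<inter> L = {x} \<and> wmin ({x} \<union> {i}) = {x} \<and>
      \<not> (\<exists>y. {y} \<inter> R = {y} \<and> wmin ({x} \<union> {y}) = {x}
          \<and> wmin ({y} \<union> {i}) = {y} \<and> {y} \<noteq> {i}))"
    using sing_sem by (smt (verit, ccfv_threshold) finite.emptyI finite_insert)
  also have "\<dots> \<longleftrightarrow> (\<exists>l\<in>L. l \<le> i \<and> (\<forall>r\<in>R. \<not> (l \<le> r \<and> r < i)))"
    unfolding le_sem Int_absorb_singleton by (auto simp: less_le)
  finally show ?thesis .
qed


theorem lemma6p2: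
  fixes z :: "'a::linorder"
  assumes dense: "\<forall>x y::'a. x < y \<longrightarrow> (\<exists>w. x < w \<and> w < y)"
    and left_endpoint: "\<forall>x. z \<le> x"
    and no_right_endpoint: "\<forall>x::'a. \<exists>y. x < y"
  shows "\<exists>\<phi>. fvars \<phi> \<subseteq> {0, 1, 2} \<and>
           (\<forall>(i::'a) A. fci A \<longrightarrow>
              (i \<in> A \<longleftrightarrow>
               wsat z ((\<lambda>_. {})(0 := lend A, 1 := rend A, 2 := {i})) \<phi>))"
proof (intro exI conjI allI impI)
  show "fvars phi \<subseteq> {0, 1, 2}" by (rule phi_vars)
  fix i :: 'a and A :: "'a set"
  assume "fci A"
  then show "i \<in> A \<longleftrightarrow> wsat z ((\<lambda>_. {})(0 := lend A, 1 := rend A, 2 := {i})) phi"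
    using fci_mem_char[OF left_endpoint dense \<open>fci A\<close>, of i] phi_sem[of z "lend A" "rend A" i] by simp
qed

end
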